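(* The fiducial interval is the smallest interval in $\mathcal{M}_\alpha$.
   Context: $\Theta$ is a connected open subset of $\mathbb{R}$, $\mathcal{X}\subseteq\mathbb{Z}$ consists of consecutive integers, $\mathrm{P}_\theta$ denotes probability under $P_\theta$, satisfying (A1) $\mathrm{P}_\theta(X=x)>0$ for all $(\theta,x)$; (A2) $\mathrm{P}_\theta(X\leq x)$ strictly decreasing in $\theta$ for each fixed $x\in\mathcal{X}\backslash\sup\mathcal{X}$; (A3) $\mathrm{P}_\theta(X=x)$ differentiable in $\theta$. $\mathcal{M}_\alpha$ is the class of confidence intervals $(L_{\alpha/2}(x),U_{\alpha/2}(x))$ for $\theta$ based on an observation $x$ of $X\sim P_\theta$ satisfying (D1) $L_{\alpha/2}(x)\leq L_{\alpha/2}(x+1)$ and $U_{\alpha/2}(x)\leq U_{\alpha/2}(x+1)$; (D2) $\inf_{\theta}\mathrm{P}_\theta(L_{\alpha/2}(X)\leq\theta)\geq 1-\alpha/2$ and $\inf_\theta\mathrm{P}_\theta(U_{\alpha/2}(X)\geq\theta)\geq 1-\alpha/2$; (D3) the interval only depends on $x$, $\alpha$ and $P_\theta$. The fiducial interval is $(\theta_L,\theta_U)$ with $\sum_{k\leq x}\mathrm{P}_{\theta_L}(X=k)=\alpha/2$ and $\sum_{k\geq x}\mathrm{P}_{\theta_U}(X=k)=\alpha/2$. An interval $I_\alpha(x)$ in a class $\mathcal{K}$ is the smallest in $\mathcal{K}$ if for any other $I^*_\alpha(x)\in\mathcal{K}$, $I_\alpha(x)\backslash I^*_\alpha(x)=\emptyset$.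 *)

theory Defs
  imports "HOL-Probability.Probability"
begin

text \<open>A confidence interval is a pair of endpoint functions \<open>L U :: int \<Rightarrow> ereal\<close>
  giving the open interval \<open>(L x, U x)\<close> for the observation \<open>x\<close>.\<close>

definition open_interval :: "ereal \<Rightarrow> ereal \<Rightarrow> real set" where
  "open_interval a b = {t. a < ereal t \<and> ereal t < b}"

text \<open>The class M_alpha: conditions (D1) and (D2).  (D3) is met automatically since
  the endpoints are functions of x alone, for the fixed model P and level alpha.\<close>
definition in_M :: "(real \<Rightarrow> int pmf) \<Rightarrow> real set \<Rightarrow> int set \<Rightarrow> real
                    \<Rightarrow> (int \<Rightarrow> ereal) \<Rightarrow> (int \<Rightarrow> ereal) \<Rightarrow> bool" where
  "in_M P \<Theta> \<X> \<alpha> L U \<longleftrightarrow>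
     (\<forall>x. x \<in> \<X> \<longrightarrow> x + 1 \<in> \<X> \<longrightarrow> L x \<le> L (x + 1) \<and> U x \<le> U (x + 1)) \<and>
     (\<forall>\<theta>\<in>\<Theta>. measure_pmf.prob (P \<theta>) {x. L x \<le> ereal \<theta>} \<ge> 1 - \<alpha> / 2) \<and>
     (\<forall>\<theta>\<in>\<Theta>. measure_pmf.prob (P \<theta>) {x. U x \<ge> ereal \<theta>} \<ge> 1 - \<alpha> / 2)"

text \<open>Fiducial endpoints: the solution in \<open>\<Theta>\<close> of the defining equation; when the
  equation has no solution (e.g. x = min X for the lower, x = max X for the upper
  endpoint) the natural boundary convention given by the infimum/supremum.\<close>
definition fiducial_lower :: "(real \<Rightarrow> int pmf) \<Rightarrow> real set \<Rightarrow> real \<Rightarrow> int \<Rightarrow> ereal" where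
  "fiducial_lower P \<Theta> \<alpha> x =
     (if \<exists>\<theta>\<in>\<Theta>. measure_pmf.prob (P \<theta>) {x..} = \<alpha> / 2
      then ereal (THE \<theta>. \<theta> \<in> \<Theta> \<and> measure_pmf.prob (P \<theta>) {x..} = \<alpha> / 2)
      else Inf (ereal ` {\<theta>\<in>\<Theta>. measure_pmf.prob (P \<theta>) {x..} > \<alpha> / 2}))"

definition fiducial_upper :: "(real \<Rightarrow> int pmf) \<Rightarrow> real set \<Rightarrow> real \<Rightarrow> int \<Rightarrow> ereal" where
  "fiducial_upper P \<Theta> \<alpha> x =
     (if \<exists>\<theta>\<in>\<Theta>. measure_pmf.prob (P \<theta>) {..x} = \<alpha> / 2
      then ereal (THE \<theta>. \<theta> \<in> \<Theta> \<and> measure_pmf.prob (P \<theta>) {..x} = \<alpha> / 2)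
      else Sup (ereal ` {\<theta>\<in>\<Theta>. measure_pmf.prob (P \<theta>) {..x} > \<alpha> / 2}))"

end

theory Submission
  imports Defs
begin

lemma prob1: "set_pmf p \<subseteq> A \<Longrightarrow> measure_pmf.prob p A = 1"
proof -
  assume "set_pmf p \<subseteq> A"
  then have "measure_pmf.prob p (- A) = 0" by (auto simp: measure_pmf_zero_iff)
  moreover have "measure_pmf.prob p (- A) = 1 - measure_pmf.prob p A"
    using measure_pmf.prob_compl[of A p] by (simp add: Compl_eq_Diff_UNIV)
  ultimately show ?thesis by simp
qed

lemma compl_prob: "measure_pmf.prob p (- A) = 1 - measure_pmf.prob p A"
    using measure_pmf.prob_compl[of A p] by (simp add: Compl_eq_Diff_UNIV)

definition flo :: "(real \<Rightarrow> int pmf) \<Rightarrow> real set \<Rightarrow> real \<Rightarrow> int \<Rightarrow> ereal" where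
  "flo Q T \<alpha> x =
     (if \<exists>\<theta>\<in>T. measure_pmf.prob (Q \<theta>) {x..} = \<alpha> / 2
      then ereal (THE \<theta>. \<theta> \<in> T \<and> measure_pmf.prob (Q \<theta>) {x..} = \<alpha> / 2)
      else Inf (ereal ` {\<theta>\<in>T. measure_pmf.prob (Q \<theta>) {x..} > \<alpha> / 2}))"

lemma ereal_neg_swap: "(a::ereal) \<le> ereal (-t) \<longleftrightarrow> ereal t \<le> - a"
  by (metis ereal_minus_le_minus ereal_uminus_uminus uminus_ereal.simps(1))

locale fid =
  fixes Q :: "real \<Rightarrow> int pmf" and T :: "real set" and X :: "int set" and \<alpha> :: real
  assumes T_open: "open T"
    and supp: "\<And>\<theta>. \<theta> \<in> T \<Longrightarrow> set_pmf (Q \<theta>) = X"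
    and consec: "\<And>a b. a \<in> X \<Longrightarrow> b \<in> X \<Longrightarrow> {a..b} \<subseteq> X"
    and strict: "\<And>\<theta>1 \<theta>2 k. \<theta>1 \<in> T \<Longrightarrow> \<theta>2 \<in> T \<Longrightarrow> \<theta>1 < \<theta>2 \<Longrightarrow> k - 1 \<in> X \<Longrightarrow> k \<in> X \<Longrightarrow>
        measure_pmf.prob (Q \<theta>1) {k..} < measure_pmf.prob (Q \<theta>2) {k..}"
    and a0: "0 < \<alpha>" and a1: "\<alpha> < 1"
begin

abbreviation G where "G \<theta> k \<equiv> measure_pmf.prob (Q \<theta>) {k..}"
definition S where "S k = {\<theta>\<in>T. G \<theta> k > \<alpha> / 2}"

lemma const_cases:
  assumes "\<not> (k - 1 \<in> X \<and> k \<in> X)"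
  shows "X \<subseteq> {k..} \<or> X \<inter> {k..} = {}"
proof (rule ccontr)
  assume "\<not> ?thesis"
  then obtain a b where a: "a \<in> X" "a < k" and b: "b \<in> X" "b \<ge> k" by (auto simp: not_le)
  then have "{a..b} \<subseteq> X" using consec by blast
  moreover have "k - 1 \<in> {a..b}" "k \<in> {a..b}" using a b by auto
  ultimately show False using assms by blast
qed

lemma G_mono:
  assumes "\<theta>1 \<in> T" "\<theta>2 \<in> T" "\<theta>1 \<le> \<theta>2"
  shows "G \<theta>1 k \<le> G \<theta>2 k"
proof (cases "k - 1 \<in> X \<and> k \<in> X")
  case True
  then show ?thesis using strict[OF assms(1,2)] assms(3)
    by (cases "\<theta>1 = \<theta>2") (auto intro: less_imp_le)
next
  case False
  from const_cases[OF False] show ?thesis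
  proof
    assume "X \<subseteq> {k..}"
    then show ?thesis using prob1 supp assms by (metis order_refl)
  next
    assume "X \<inter> {k..} = {}"
    then have "G \<theta>1 k = 0" "G \<theta>2 k = 0" using supp assms by (auto simp: measure_pmf_zero_iff)
    then show ?thesis by simp
  qed
qed

lemma sol_X:
  assumes "\<theta>0 \<in> T" "G \<theta>0 k = \<alpha> / 2"
  shows "k - 1 \<in> X \<and> k \<in> X"
proof (rule ccontr)
  assume "\<not> ?thesis"
  from const_cases[OF this] show False
  proof
    assume "X \<subseteq> {k..}"
    then have "G \<theta>0 k = 1" using prob1 supp assms by metis
    then show False using assms a1 by simp
  next
    assume "X \<inter> {k..} = {}"
    then have "G \<theta>0 k = 0" using supp assms by (auto simp: measure_pmf_zero_iff)
    then show False using assms a0 by simp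
  qed
qed

lemma sol_above:
  assumes "\<theta>0 \<in> T" "G \<theta>0 k = \<alpha> / 2" "\<theta> \<in> T" "\<theta>0 < \<theta>"
  shows "G \<theta> k > \<alpha> / 2"
  using strict[OF assms(1,3,4)] sol_X[OF assms(1,2)] assms(2) by auto

lemma sol_below:
  assumes "\<theta>0 \<in> T" "G \<theta>0 k = \<alpha> / 2" "\<theta> \<in> T" "\<theta> < \<theta>0"
  shows "G \<theta> k < \<alpha> / 2"
  using strict[OF assms(3,1,4)] sol_X[OF assms(1,2)] assms(2) by auto

lemma sol_unique:
  assumes "\<theta>0 \<in> T" "G \<theta>0 k = \<alpha> / 2" "\<theta> \<in> T" "G \<theta> k = \<alpha> / 2"
  shows "\<theta> = \<theta>0"
  using sol_above[OF assms(1,2,3)] sol_below[OF assms(1,2,3)] assms(4)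
  by (cases "\<theta> < \<theta>0"; cases "\<theta>0 < \<theta>") auto

lemma flo_sol:
  assumes "\<theta>0 \<in> T" "G \<theta>0 k = \<alpha> / 2"
  shows "flo Q T \<alpha> k = ereal \<theta>0"
proof -
  have "(THE \<theta>. \<theta> \<in> T \<and> G \<theta> k = \<alpha> / 2) = \<theta>0"
    using assms sol_unique by (intro the_equality) auto
  then show ?thesis using assms unfolding flo_def by auto
qed

lemma flo_Inf: "flo Q T \<alpha> k = Inf (ereal ` S k)"
proof (cases "\<exists>\<theta>\<in>T. G \<theta> k = \<alpha> / 2")
  case False
  then show ?thesis unfolding flo_def S_def by simp
next
  case True
  then obtain \<theta>0 where th: "\<theta>0 \<in> T" "G \<theta>0 k = \<alpha> / 2" by auto
  have Seq: "S k = {\<theta>\<in>T. \<theta>0 < \<theta>}"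
    using sol_above[OF th] sol_below[OF th] th unfolding S_def
    by (force simp: not_less_iff_gr_or_eq)
  obtain e where e: "e > 0" "ball \<theta>0 e \<subseteq> T" using T_open th(1) open_contains_ball by blast
  have "Inf (ereal ` S k) = ereal \<theta>0"
  proof (rule antisym)
    show "ereal \<theta>0 \<le> Inf (ereal ` S k)" unfolding Seq by (auto intro!: Inf_greatest)
    show "Inf (ereal ` S k) \<le> ereal \<theta>0"
    proof (rule dense_ge)
      fix y assume y: "ereal \<theta>0 < y"
      show "Inf (ereal ` S k) \<le> y"
      proof (cases y)
        case (real r)
        define t where "t = min r (\<theta>0 + e / 2)"
        have "t \<in> ball \<theta>0 e" using e y real by (auto simp: t_def dist_real_def)
        then have "t \<in> S k" using e y real unfolding Seq by (auto simp: t_def)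
        then have "Inf (ereal ` S k) \<le> ereal t" by (auto intro: Inf_lower)
        also have "\<dots> \<le> y" using real by (simp add: t_def)
        finally show ?thesis .
      qed (use y in auto)
    qed
  qed
  then show ?thesis using flo_sol[OF th] by simp
qed

lemma flo_mono: "k \<le> m \<Longrightarrow> flo Q T \<alpha> k \<le> flo Q T \<alpha> m"
proof -
  assume km: "k \<le> m"
  have "S m \<subseteq> S k"
  proof
    fix \<theta> assume "\<theta> \<in> S m"
    moreover have "G \<theta> m \<le> G \<theta> k"
      using km by (intro measure_pmf.finite_measure_mono) auto
    ultimately show "\<theta> \<in> S k" unfolding S_def by auto
  qed
  then show ?thesis unfolding flo_Inf by (intro Inf_superset_mono) auto
qed

lemma cov_key:
  assumes "\<theta> \<in> T" "ereal \<theta> < flo Q T \<alpha> k"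
  shows "G \<theta> k \<le> \<alpha> / 2"
proof (rule ccontr)
  assume "\<not> ?thesis"
  then have "\<theta> \<in> S k" using assms unfolding S_def by auto
  then have "flo Q T \<alpha> k \<le> ereal \<theta>" unfolding flo_Inf by (auto intro: Inf_lower)
  then show False using assms by simp
qed


lemma coverage:
  assumes th: "\<theta> \<in> T"
  shows "measure_pmf.prob (Q \<theta>) {x. flo Q T \<alpha> x \<le> ereal \<theta>} \<ge> 1 - \<alpha> / 2"
proof -
  define B where "B = {k. ereal \<theta> < flo Q T \<alpha> k}"
  have up: "k \<in> B \<Longrightarrow> k \<le> m \<Longrightarrow> m \<in> B" for k m
    unfolding B_def using flo_mono[of k m] by auto
  have Beq: "{x. flo Q T \<alpha> x \<le> ereal \<theta>} = - B" unfolding B_def by (auto simp: not_less)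
  have "measure_pmf.prob (Q \<theta>) B \<le> \<alpha> / 2"
  proof (cases "\<exists>k0. k0 \<in> B \<and> k0 - 1 \<notin> B")
    case True
    then obtain k0 where k0: "k0 \<in> B" "k0 - 1 \<notin> B" by auto
    have "B = {k0..}"
    proof
      show "{k0..} \<subseteq> B" using up k0 by auto
      show "B \<subseteq> {k0..}"
      proof
        fix m assume "m \<in> B"
        show "m \<in> {k0..}"
        proof (rule ccontr)
          assume "m \<notin> {k0..}"
          then have "m \<le> k0 - 1" by auto
          then show False using up[OF \<open>m \<in> B\<close>] k0(2) by blast
        qed
      qed
    qed
    then show ?thesis using cov_key[OF th] k0(1) unfolding B_def by auto
  next
    case False
    show ?thesis
    proof (cases "B = {}")
      case True then show ?thesis using a0 by simp
    next
      case Bne: False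
      then obtain k where k: "k \<in> B" by auto
      have down: "k - int n \<in> B" for n
      proof (induction n)
        case 0 then show ?case using k by simp
      next
        case (Suc n)
        then have "k - int n - 1 \<in> B" using False by blast
        then show ?case by (simp add: algebra_simps)
      qed
      have allB: "m \<in> B" for m
      proof (cases "m \<le> k")
        case True
        then have "m = k - int (nat (k - m))" by simp
        then show ?thesis using down by metis
      next
        case False then show ?thesis using up[OF k] by simp
      qed
      have lim: "(\<lambda>n. G \<theta> (k - int n)) \<longlonglongrightarrow> measure_pmf.prob (Q \<theta>) (\<Union>n. {k - int n..})"
        by (rule measure_pmf.finite_Lim_measure_incseq) (auto simp: incseq_def)
      have "(\<Union>n. {k - int n..}) = UNIV"
      proof -
        have "m \<in> {k - int (nat (k - m))..}" for m by auto
        then show ?thesis by blast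
      qed
      then have lim1: "(\<lambda>n. G \<theta> (k - int n)) \<longlonglongrightarrow> 1" using lim by simp
      have "\<alpha> / 2 < 1" using a1 by simp
      from order_tendstoD(1)[OF lim1 this] obtain n where "G \<theta> (k - int n) > \<alpha> / 2"
        by (auto dest: eventually_happens)
      moreover have "G \<theta> (k - int n) \<le> \<alpha> / 2"
        using cov_key[OF th] allB[of "k - int n"] unfolding B_def by auto
      ultimately show ?thesis by simp
    qed
  qed
  then show ?thesis unfolding Beq compl_prob by simp
qed

lemma minimal:
  assumes Lmono: "\<And>x. x \<in> X \<Longrightarrow> x + 1 \<in> X \<Longrightarrow> L x \<le> L (x + 1)"
    and Lcov: "\<And>\<theta>. \<theta> \<in> T \<Longrightarrow> measure_pmf.prob (Q \<theta>) {x. L x \<le> ereal \<theta>} \<ge> 1 - \<alpha> / 2"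
    and x0: "x0 \<in> X"
  shows "L x0 \<le> flo Q T \<alpha> x0"
proof (rule ccontr)
  assume "\<not> ?thesis"
  then have lt: "Inf (ereal ` S x0) < L x0" unfolding flo_Inf by simp
  then obtain s where s: "s \<in> S x0" "ereal s < L x0" by (auto simp: Inf_less_iff)
  obtain z where z: "ereal s < z" "z < L x0" using dense[OF s(2)] by blast
  then obtain r where r: "z = ereal r" by (cases z) auto
  have sT: "s \<in> T" and sG: "G s x0 > \<alpha> / 2" using s(1) unfolding S_def by auto
  obtain e where e: "e > 0" "ball s e \<subseteq> T" using T_open sT open_contains_ball by blast
  define \<theta> where "\<theta> = min r (s + e / 2)"
  have sr: "s < r" using z r by simp
  have thT: "\<theta> \<in> T" using e sr by (auto simp: \<theta>_def dist_real_def intro!: subsetD[OF e(2)])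
  have "s < \<theta>" using sr e by (simp add: \<theta>_def)
  then have Gth: "G \<theta> x0 > \<alpha> / 2" using G_mono[OF sT thT] sG by (meson less_le_trans less_imp_le)
  have thL: "ereal \<theta> < L x0" proof -
    have "ereal \<theta> \<le> ereal r" by (simp add: \<theta>_def)
    also have "\<dots> < L x0" using z r by simp
    finally show ?thesis .
  qed
  have Lup0: "x0 \<le> x \<Longrightarrow> x \<in> X \<longrightarrow> L x0 \<le> L x" for x
  proof (induction x rule: int_ge_induct)
    case base then show ?case by simp
  next
    case (step i)
    show ?case
    proof
      assume i1: "i + 1 \<in> X"
      then have "{x0..i+1} \<subseteq> X" using consec x0 by blast
      then have "i \<in> X" using step(1) by auto
      then show "L x0 \<le> L (i + 1)" using step i1 Lmono[of i] by (meson order_trans)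
    qed
  qed
  have Lup: "x \<in> X \<Longrightarrow> x0 \<le> x \<Longrightarrow> L x0 \<le> L x" for x using Lup0 by blast
  have sub: "{x. L x \<le> ereal \<theta>} \<inter> set_pmf (Q \<theta>) \<subseteq> - {x0..}"
  proof
    fix x assume "x \<in> {x. L x \<le> ereal \<theta>} \<inter> set_pmf (Q \<theta>)"
    then have "L x \<le> ereal \<theta>" "x \<in> X" using supp[OF thT] by auto
    then show "x \<in> - {x0..}" using Lup thL by fastforce
  qed
  have "measure_pmf.prob (Q \<theta>) {x. L x \<le> ereal \<theta>}
        = measure_pmf.prob (Q \<theta>) ({x. L x \<le> ereal \<theta>} \<inter> set_pmf (Q \<theta>))"
    by (simp add: measure_Int_set_pmf)
  also have "\<dots> \<le> measure_pmf.prob (Q \<theta>) (- {x0..})"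
    using sub by (intro measure_pmf.finite_measure_mono) auto
  also have "\<dots> = 1 - G \<theta> x0" by (rule compl_prob)
  finally show False using Gth Lcov[OF thT] by simp
qed

end
theorem proposition9:
  fixes P :: "real \<Rightarrow> int pmf" and \<Theta> :: "real set" and \<X> :: "int set" and \<alpha> :: real
  assumes Theta_open: "open \<Theta>" and Theta_conn: "connected \<Theta>" and Theta_ne: "\<Theta> \<noteq> {}"
    and X_consec: "\<And>a b. a \<in> \<X> \<Longrightarrow> b \<in> \<X> \<Longrightarrow> {a..b} \<subseteq> \<X>"
    and support: "\<And>\<theta>. \<theta> \<in> \<Theta> \<Longrightarrow> set_pmf (P \<theta>) = \<X>"
    and A1: "\<And>\<theta> x. \<theta> \<in> \<Theta> \<Longrightarrow> x \<in> \<X> \<Longrightarrow> pmf (P \<theta>) x > 0"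
    and A2: "\<And>x \<theta>1 \<theta>2. x \<in> \<X> \<Longrightarrow> (\<exists>y\<in>\<X>. x < y) \<Longrightarrow> \<theta>1 \<in> \<Theta> \<Longrightarrow> \<theta>2 \<in> \<Theta> \<Longrightarrow>
               \<theta>1 < \<theta>2 \<Longrightarrow> measure_pmf.prob (P \<theta>2) {..x} < measure_pmf.prob (P \<theta>1) {..x}"
    and A3: "\<And>x. x \<in> \<X> \<Longrightarrow> (\<lambda>\<theta>. pmf (P \<theta>) x) differentiable_on \<Theta>"
    and alpha: "0 < \<alpha>" "\<alpha> < 1"
  shows "in_M P \<Theta> \<X> \<alpha> (fiducial_lower P \<Theta> \<alpha>) (fiducial_upper P \<Theta> \<alpha>) \<and>
         (\<forall>L U. in_M P \<Theta> \<X> \<alpha> L U \<longrightarrow>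
            (\<forall>x\<in>\<X>. open_interval (fiducial_lower P \<Theta> \<alpha> x) (fiducial_upper P \<Theta> \<alpha> x)
                     - open_interval (L x) (U x) = {}))"
proof -
  define Q where "Q \<theta> = map_pmf uminus (P (- \<theta>))" for \<theta>
  define T where "T = uminus ` \<Theta>"
  define X' where "X' = uminus ` \<X>"
  have vim1: "uminus -` {k..} = {..-k}" for k :: int by auto
  have vim2: "uminus -` {..k} = {-k..}" for k :: int by auto
  have GQ: "measure_pmf.prob (Q \<theta>) {k..} = measure_pmf.prob (P (-\<theta>)) {..-k}" for \<theta> k
    unfolding Q_def measure_map_pmf vim1 ..
  have TI: "\<theta> \<in> T \<longleftrightarrow> -\<theta> \<in> \<Theta>" for \<theta>
    unfolding T_def by (force simp: image_iff)
  have XI: "k \<in> X' \<longleftrightarrow> -k \<in> \<X>" for k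
    unfolding X'_def by (force simp: image_iff)
  interpret F: fid P \<Theta> \<X> \<alpha>
  proof
    fix \<theta>1 \<theta>2 k assume h: "\<theta>1 \<in> \<Theta>" "\<theta>2 \<in> \<Theta>" "\<theta>1 < \<theta>2" "k - 1 \<in> \<X>" "k \<in> \<X>"
    have c: "{k..} = - {..k-1}" by auto
    have "measure_pmf.prob (P \<theta>2) {..k-1} < measure_pmf.prob (P \<theta>1) {..k-1}"
      using A2[of "k-1" \<theta>1 \<theta>2] h by force
    then show "measure_pmf.prob (P \<theta>1) {k..} < measure_pmf.prob (P \<theta>2) {k..}"
      unfolding c compl_prob by simp
  qed (use Theta_open support X_consec alpha in auto)
  interpret R: fid Q T X' \<alpha>
  proof
    show "open T" unfolding T_def using Theta_open by (rule open_negations)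
  next
    fix \<theta> assume "\<theta> \<in> T"
    then show "set_pmf (Q \<theta>) = X'" unfolding Q_def X'_def using support TI by simp
  next
    fix a b assume ab: "a \<in> X'" "b \<in> X'"
    show "{a..b} \<subseteq> X'"
    proof
      fix x assume "x \<in> {a..b}"
      then have "-x \<in> {-b..-a}" by auto
      then have "-x \<in> \<X>" using X_consec ab XI by blast
      then show "x \<in> X'" using XI by simp
    qed
  next
    fix \<theta>1 \<theta>2 k assume h: "\<theta>1 \<in> T" "\<theta>2 \<in> T" "\<theta>1 < \<theta>2" "k - 1 \<in> X'" "k \<in> X'"
    have "measure_pmf.prob (P (-\<theta>1)) {..-k} < measure_pmf.prob (P (-\<theta>2)) {..-k}"
      using A2[of "-k" "-\<theta>2" "-\<theta>1"] h TI XI by force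
    then show "measure_pmf.prob (Q \<theta>1) {k..} < measure_pmf.prob (Q \<theta>2) {k..}"
      unfolding GQ .
  qed (use alpha in auto)
  have FL: "fiducial_lower P \<Theta> \<alpha> = flo P \<Theta> \<alpha>"
    by (intro ext) (simp add: fiducial_lower_def flo_def)
  have FU: "fiducial_upper P \<Theta> \<alpha> x = - flo Q T \<alpha> (-x)" for x
  proof (cases "\<exists>\<theta>\<in>\<Theta>. measure_pmf.prob (P \<theta>) {..x} = \<alpha> / 2")
    case True
    then obtain \<theta>0 where th: "\<theta>0 \<in> \<Theta>" "measure_pmf.prob (P \<theta>0) {..x} = \<alpha> / 2" by auto
    have thq: "-\<theta>0 \<in> T" "measure_pmf.prob (Q (-\<theta>0)) {-x..} = \<alpha> / 2" using th TI GQ by auto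
    have "(THE \<theta>. \<theta> \<in> \<Theta> \<and> measure_pmf.prob (P \<theta>) {..x} = \<alpha> / 2) = \<theta>0"
    proof (rule the_equality)
      fix \<theta> assume "\<theta> \<in> \<Theta> \<and> measure_pmf.prob (P \<theta>) {..x} = \<alpha> / 2"
      then have "-\<theta> \<in> T" "measure_pmf.prob (Q (-\<theta>)) {-x..} = \<alpha> / 2" using TI GQ by auto
      then have "-\<theta> = -\<theta>0" using R.sol_unique[OF thq] by blast
      then show "\<theta> = \<theta>0" by simp
    qed (use th in auto)
    then show ?thesis using True R.flo_sol[OF thq] unfolding fiducial_upper_def by simp
  next
    case False
    have nq: "\<not> (\<exists>\<theta>\<in>T. measure_pmf.prob (Q \<theta>) {-x..} = \<alpha> / 2)"
      using False TI GQ by auto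
    have seteq: "{\<theta>\<in>T. measure_pmf.prob (Q \<theta>) {-x..} > \<alpha> / 2}
       = uminus ` {\<theta>\<in>\<Theta>. measure_pmf.prob (P \<theta>) {..x} > \<alpha> / 2}"
    proof -
      have "\<theta> \<in> {\<theta>\<in>T. measure_pmf.prob (Q \<theta>) {-x..} > \<alpha> / 2} \<longleftrightarrow>
            -\<theta> \<in> {\<theta>\<in>\<Theta>. measure_pmf.prob (P \<theta>) {..x} > \<alpha> / 2}" for \<theta>
        using TI GQ by simp
      then show ?thesis by (force simp: image_iff)
    qed
    have "flo Q T \<alpha> (-x) = Inf (ereal ` uminus ` {\<theta>\<in>\<Theta>. measure_pmf.prob (P \<theta>) {..x} > \<alpha> / 2})"
      unfolding flo_def using nq seteq by simp
    also have "ereal ` uminus ` A = uminus ` ereal ` A" for A :: "real set"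
      by (auto simp: image_image)
    then have "Inf (ereal ` uminus ` {\<theta>\<in>\<Theta>. measure_pmf.prob (P \<theta>) {..x} > \<alpha> / 2})
       = - Sup (ereal ` {\<theta>\<in>\<Theta>. measure_pmf.prob (P \<theta>) {..x} > \<alpha> / 2})"
      by (simp add: ereal_Inf_uminus_image_eq)
    finally show ?thesis using False unfolding fiducial_upper_def by simp
  qed
  have PQ: "Q (-\<theta>) = map_pmf uminus (P \<theta>)" for \<theta> unfolding Q_def by simp
  show ?thesis
  proof (intro conjI allI impI ballI)
    show "in_M P \<Theta> \<X> \<alpha> (fiducial_lower P \<Theta> \<alpha>) (fiducial_upper P \<Theta> \<alpha>)"
      unfolding in_M_def
    proof (intro conjI allI impI ballI)
      fix x :: int
      show "fiducial_lower P \<Theta> \<alpha> x \<le> fiducial_lower P \<Theta> \<alpha> (x + 1)"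
        unfolding FL by (rule F.flo_mono) simp
      have "flo Q T \<alpha> (- (x + 1)) \<le> flo Q T \<alpha> (- x)" by (rule R.flo_mono) simp
      then show "fiducial_upper P \<Theta> \<alpha> x \<le> fiducial_upper P \<Theta> \<alpha> (x + 1)"
        unfolding FU by simp
    next
      fix \<theta> assume th: "\<theta> \<in> \<Theta>"
      show "1 - \<alpha> / 2 \<le> measure_pmf.prob (P \<theta>) {x. fiducial_lower P \<Theta> \<alpha> x \<le> ereal \<theta>}"
        unfolding FL using F.coverage[OF th] .
    next
      fix \<theta> assume th: "\<theta> \<in> \<Theta>"
      have "-\<theta> \<in> T" using th TI by simp
      from R.coverage[OF this] have
        "1 - \<alpha> / 2 \<le> measure_pmf.prob (P \<theta>) (uminus -` {x. flo Q T \<alpha> x \<le> ereal (- \<theta>)})"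
        unfolding PQ measure_map_pmf .
      also have "uminus -` {x. flo Q T \<alpha> x \<le> ereal (- \<theta>)} = {x. ereal \<theta> \<le> fiducial_upper P \<Theta> \<alpha> x}"
        unfolding FU by (auto simp: ereal_neg_swap)
      finally show "1 - \<alpha> / 2 \<le> measure_pmf.prob (P \<theta>) {x. ereal \<theta> \<le> fiducial_upper P \<Theta> \<alpha> x}" .
    qed
  next
    fix L U x
    assume M: "in_M P \<Theta> \<X> \<alpha> L U" and x: "x \<in> \<X>"
    have Lle: "L x \<le> fiducial_lower P \<Theta> \<alpha> x"
      unfolding FL
    proof (rule F.minimal[OF _ _ x])
      show "\<And>x. x \<in> \<X> \<Longrightarrow> x + 1 \<in> \<X> \<Longrightarrow> L x \<le> L (x + 1)" using M unfolding in_M_def by blast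
      show "\<And>\<theta>. \<theta> \<in> \<Theta> \<Longrightarrow> 1 - \<alpha> / 2 \<le> measure_pmf.prob (P \<theta>) {x. L x \<le> ereal \<theta>}"
        using M unfolding in_M_def by blast
    qed
    have "(\<lambda>y. - U (-y)) (-x) \<le> flo Q T \<alpha> (-x)"
    proof (rule R.minimal)
      show "-x \<in> X'" using x XI by simp
    next
      fix y assume y: "y \<in> X'" "y + 1 \<in> X'"
      then have "-(y + 1) \<in> \<X>" "-y \<in> \<X>" using XI by auto
      moreover have "-(y + 1) = -y - 1" "-y = -y - 1 + 1" by simp_all
      ultimately have "-y - 1 \<in> \<X>" "-y - 1 + 1 \<in> \<X>" by metis+
      then have "U (-y - 1) \<le> U (-y - 1 + 1)" using M unfolding in_M_def by blast
      moreover have "- (y + 1) = -y - 1" by simp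
      ultimately show "- U (- y) \<le> - U (- (y + 1))" by simp
    next
      fix \<theta> assume "\<theta> \<in> T"
      then have th: "-\<theta> \<in> \<Theta>" using TI by simp
      have "1 - \<alpha> / 2 \<le> measure_pmf.prob (P (-\<theta>)) {x. U x \<ge> ereal (-\<theta>)}"
        using M th unfolding in_M_def by blast
      also have "{x. U x \<ge> ereal (-\<theta>)} = uminus -` {y. - U (- y) \<le> ereal \<theta>}"
        by (auto simp: ereal_uminus_le_reorder)
      finally show "1 - \<alpha> / 2 \<le> measure_pmf.prob (Q \<theta>) {y. - U (- y) \<le> ereal \<theta>}"
        unfolding Q_def measure_map_pmf .
    qed
    then have Uge: "fiducial_upper P \<Theta> \<alpha> x \<le> U x"
      unfolding FU by (simp add: ereal_uminus_le_reorder)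
    show "open_interval (fiducial_lower P \<Theta> \<alpha> x) (fiducial_upper P \<Theta> \<alpha> x)
           - open_interval (L x) (U x) = {}"
      using Lle Uge unfolding open_interval_def by (auto dest: le_less_trans less_le_trans)
  qed
qed

end
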